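(* Let $n\geq1$. For all $a,r\in\mathbb N$ and all $l\in\mathbb N$ with $l\leq n$, $$\sum_{i=0}^l(-1)^i\binom{l}{i}\sum_{j=0}^{n-l+1}(-1)^{n-l+1+j}\binom{n-l+1}{j}\overline{(a+r+j,\,r+i+j)}=\bar0.$$
   Context: $\Lambda_{2,n}=\{\alpha\in\mathbb N^2:1\leq\alpha_1+\alpha_2\leq n\}$, $\lambda_{2,n}=|\Lambda_{2,n}|$, and for $v\in\mathbb N^2$, $\bar v=\big(\binom{v_1}{\alpha_1}\binom{v_2}{\alpha_2}\big)_{\alpha\in\Lambda_{2,n}}\in\mathbb C^{\lambda_{2,n}}$; $\bar0$ is the zero vector. *)

theory Defs
  imports Complex_Main
begin

definition Lambda2 :: "nat \<Rightarrow> (nat \<times> nat) set" where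
  "Lambda2 n = {\<alpha>. 1 \<le> fst \<alpha> + snd \<alpha> \<and> fst \<alpha> + snd \<alpha> \<le> n}"

(* The vector bar v in C^{Lambda_{2,n}}, represented as a function on N^2
   whose support is contained in Lambda_{2,n} (value 0 outside). *)
definition barv :: "nat \<Rightarrow> nat \<times> nat \<Rightarrow> (nat \<times> nat) \<Rightarrow> complex" where
  "barv n v = (\<lambda>\<alpha>. if \<alpha> \<in> Lambda2 n
      then of_nat ((fst v choose fst \<alpha>) * (snd v choose snd \<alpha>)) else 0)"

end

theory Submission imports Defs "HOL-Computational_Algebra.Polynomial" begin

definition DD :: "nat \<Rightarrow> (nat \<Rightarrow> complex) \<Rightarrow> nat \<Rightarrow> complex" where
  "DD m f x = (\<Sum>i\<le>m. (-1)^i * of_nat (m choose i) * f (x + i))"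

lemma DD_Suc: "DD (Suc m) f x = DD m (\<lambda>y. f y - f (Suc y)) x"
proof -
  have A: "DD (Suc m) f x = f x + (\<Sum>i\<le>m. (-1)^(Suc i) * of_nat (Suc m choose Suc i) * f (x + Suc i))"
    unfolding DD_def by (subst sum.atMost_Suc_shift) simp
  have B: "(\<Sum>i\<le>m. (-1)^(Suc i) * of_nat (Suc m choose Suc i) * f (x + Suc i))
      = - (\<Sum>i\<le>m. (-1)^i * of_nat (m choose i) * f (Suc (x + i)))
        + (\<Sum>i\<le>m. (-1)^(Suc i) * of_nat (m choose Suc i) * f (x + Suc i))"
    unfolding sum_negf[symmetric] sum.distrib[symmetric]
    by (rule sum.cong) (simp_all add: algebra_simps)
  have C: "(\<Sum>i\<le>Suc m. (-1)^i * of_nat (m choose i) * f (x + i))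
      = f x + (\<Sum>i\<le>m. (-1)^(Suc i) * of_nat (m choose Suc i) * f (x + Suc i))"
    by (subst sum.atMost_Suc_shift) simp
  have C': "(\<Sum>i\<le>Suc m. (-1)^i * of_nat (m choose i) * f (x + i))
      = (\<Sum>i\<le>m. (-1)^i * of_nat (m choose i) * f (x + i))"
    by simp
  have D: "DD m (\<lambda>y. f y - f (Suc y)) x = (\<Sum>i\<le>m. (-1)^i * of_nat (m choose i) * f (x + i))
     - (\<Sum>i\<le>m. (-1)^i * of_nat (m choose i) * f (Suc (x + i)))"
    unfolding DD_def sum_subtractf[symmetric] by (rule sum.cong) (simp_all add: algebra_simps)
  show ?thesis using A B C C' D by simp
qed

lemma DD_lin: "DD m (\<lambda>y. c * f y) x = c * DD m f x"
  unfolding DD_def by (simp add: sum_distrib_left algebra_simps)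

lemma DD_zero: "DD m (\<lambda>y. 0) x = 0"
  unfolding DD_def by simp

lemma DD_choose: "DD l (\<lambda>y. of_nat (y choose q)) x
   = (if l \<le> q then (-1)^l * of_nat (x choose (q - l)) else 0)"
proof (induction l arbitrary: q)
  case 0
  then show ?case by (simp add: DD_def)
next
  case (Suc l)
  show ?case
  proof (cases q)
    case 0
    then show ?thesis by (simp add: DD_Suc DD_zero)
  next
    case (Suc q')
    have "DD (Suc l) (\<lambda>y. of_nat (y choose q)) x = DD l (\<lambda>y. (-1) * of_nat (y choose q')) x"
      unfolding DD_Suc using Suc by simp
    also have "\<dots> = (-1) * DD l (\<lambda>y. of_nat (y choose q')) x" by (rule DD_lin)
    finally show ?thesis using Suc.IH[of q'] Suc by simp
  qed
qed

lemma DD_poly: "degree P < m \<Longrightarrow> DD m (\<lambda>y. poly P (of_nat y)) x = 0"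
proof (induction m arbitrary: P)
  case 0
  then show ?case by simp
next
  case (Suc m)
  define Q where "Q = P - pcompose P [:1, 1:]"
  have "DD m (\<lambda>y. poly Q (of_nat y)) x = 0"
  proof (cases "degree P = 0")
    case True
    then obtain c where "P = [:c:]" using degree_eq_zeroE by blast
    then have "Q = 0" unfolding Q_def by simp
    then show ?thesis by (simp add: DD_zero)
  next
    case False
    have "degree Q \<le> degree P - 1"
    proof (rule degree_le, intro allI impI)
      fix i assume i: "degree P - 1 < i"
      show "coeff Q i = 0"
      proof (cases "i = degree P")
        case True
        have "coeff (pcompose P [:1, 1:]) (degree P) = lead_coeff P"
          using lead_coeff_comp[of "[:1,1:]" P] degree_pcompose[of P "[:1,1:]"] by simp
        then show ?thesis unfolding Q_def using True by simp
      next
        case False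
        then have "i > degree P" using i by simp
        moreover have "degree (pcompose P [:1, 1:]) = degree P" using degree_pcompose[of P "[:1,1:]"] by simp
        ultimately show ?thesis unfolding Q_def by (simp add: coeff_eq_0)
      qed
    qed
    then show ?thesis using Suc.prems False Suc.IH by simp
  qed
  have "DD (Suc m) (\<lambda>y. poly P (of_nat y)) x = DD m (\<lambda>y. poly Q (of_nat y)) x"
    unfolding DD_Suc Q_def by (simp add: poly_pcompose algebra_simps)
  then show ?case using \<open>DD m (\<lambda>y. poly Q (of_nat y)) x = 0\<close> by simp
qed

definition BP :: "complex \<Rightarrow> nat \<Rightarrow> complex poly" where
  "BP c k = smult (1 / fact k) (\<Prod>i\<in>{0..<k}. [:c - of_nat i, 1:])"

lemma BP_degree: "degree (BP c k) \<le> k"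
proof -
  have "degree (\<Prod>i\<in>{0..<k}. [:c - of_nat i, 1:]) \<le> (\<Sum>i\<in>{0..<k}. (degree \<circ> (\<lambda>i. [:c - of_nat i, 1:])) i)"
    by (rule degree_prod_sum_le) simp
  also have "\<dots> = k" by simp
  finally show ?thesis unfolding BP_def using degree_smult_le order_trans by blast
qed

lemma BP_poly: "poly (BP c k) x = (c + x) gchoose k"
proof (cases k)
  case 0
  then show ?thesis by (simp add: BP_def)
next
  case (Suc k')
  have "{0..<k} = {0..k'}" using Suc by auto
  then show ?thesis unfolding BP_def using Suc
    by (simp add: poly_prod gbinomial_Suc algebra_simps)
qed

lemma choose_BP: "of_nat ((c + y) choose k) = poly (BP (of_nat c) k) (of_nat y)"
  by (simp add: BP_poly binomial_gbinomial)

theorem lemma2p12: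
  fixes n a r l :: nat
  assumes "n \<ge> 1" and "l \<le> n"
  shows "(\<lambda>\<alpha>. \<Sum>i=0..l. \<Sum>j=0..n-l+1.
            ((-1) ^ i * of_nat (l choose i)
              * (-1) ^ (n - l + 1 + j) * of_nat ((n - l + 1) choose j))
            * barv n (a + r + j, r + i + j) \<alpha>)
         = (\<lambda>_. 0 :: complex)"
proof (rule ext)
  fix \<alpha> :: "nat \<times> nat"
  obtain p q where pq: "\<alpha> = (p, q)" by fastforce
  define m where "m = n - l + 1"
  show "(\<Sum>i=0..l. \<Sum>j=0..n-l+1.
            ((-1) ^ i * of_nat (l choose i)
              * (-1) ^ (n - l + 1 + j) * of_nat ((n - l + 1) choose j))
            * barv n (a + r + j, r + i + j) \<alpha>) = 0"
  proof (cases "\<alpha> \<in> Lambda2 n")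
    case False
    then show ?thesis by (simp add: barv_def)
  next
    case True
    then have pqn: "p + q \<le> n" using pq by (simp add: Lambda2_def)
    have "(\<Sum>i=0..l. \<Sum>j=0..n-l+1.
            ((-1) ^ i * of_nat (l choose i)
              * (-1) ^ (n - l + 1 + j) * of_nat ((n - l + 1) choose j))
            * barv n (a + r + j, r + i + j) \<alpha>)
        = (\<Sum>j\<le>m. \<Sum>i\<le>l. ((-1) ^ (m + j) * of_nat (m choose j) * of_nat ((a + r + j) choose p))
            * ((-1) ^ i * of_nat (l choose i) * of_nat (((r + j) + i) choose q)))"
      using True unfolding pq m_def atLeast0AtMost
      by (subst sum.swap) (intro sum.cong refl, simp add: barv_def algebra_simps)
    also have "\<dots> = (\<Sum>j\<le>m. ((-1) ^ (m + j) * of_nat (m choose j) * of_nat ((a + r + j) choose p))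
            * DD l (\<lambda>y. of_nat (y choose q)) (r + j))"
      unfolding DD_def sum_distrib_left by (intro sum.cong refl)
    also have "\<dots> = 0"
    proof (cases "l \<le> q")
      case False
      then show ?thesis by (simp add: DD_choose)
    next
      case True
      define P where "P = BP (of_nat (a + r)) p * BP (of_nat r) (q - l)"
      have degP: "degree P < m"
      proof -
        have "degree P \<le> p + (q - l)" unfolding P_def
          using degree_mult_le[of "BP (of_nat (a + r)) p" "BP (of_nat r) (q - l)"] BP_degree
          by (meson add_mono order_trans)
        then show ?thesis using pqn True unfolding m_def by linarith
      qed
      have "(\<Sum>j\<le>m. ((-1) ^ (m + j) * of_nat (m choose j) * of_nat ((a + r + j) choose p))
            * DD l (\<lambda>y. of_nat (y choose q)) (r + j))
          = (\<Sum>j\<le>m. ((-1) ^ (m + j) * of_nat (m choose j) * of_nat ((a + r + j) choose p))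
            * ((-1) ^ l * of_nat ((r + j) choose (q - l))))"
        using True by (simp add: DD_choose)
      also have "\<dots> = (-1) ^ (m + l) * DD m (\<lambda>y. poly P (of_nat y)) 0"
        unfolding DD_def sum_distrib_left
        by (intro sum.cong refl)
           (simp add: P_def BP_poly binomial_gbinomial power_add algebra_simps)
      also have "\<dots> = 0" using DD_poly[OF degP] by simp
      finally show ?thesis .
    qed
    finally show ?thesis .
  qed
qed

end
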